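(* Let $\Omega$ be a finite set, let $k \geq 2$ be an integer and let $f \colon \mathbb{N}_0 \to \Omega$ be a sequence. Then the following are equivalent: (1) $f$ is asymptotically $k$-automatic; (2) there exist $d \in \mathbb{N}$, sequences $f_0,f_1,\dots,f_{d-1}\colon \mathbb{N}_0\to\Omega$ and a $k$-automatic map $\phi\colon \Sigma_k^* \to \Sigma_d$ such that for each word $u \in \Sigma_k^*$ of length $\alpha := |u|$ we have $f(k^\alpha n + [u]_k) = f_{\phi(u)}(n)$ for almost all $n \in \mathbb{N}_0$.
   Context: $\mathbb{N}_0=\{0,1,2,\dots\}$, $\mathbb{N}=\{1,2,\dots\}$. For $A\subset\mathbb{N}_0$, $\bar d(A) = \limsup_{N\to\infty} |A\cap\{0,\dots,N-1\}|/N$; a property holds for almost all $n\in\mathbb{N}_0$ if the set of $n$ where it fails has upper density $0$. Sequences $f,g\colon\mathbb{N}_0\to\Omega$ are asymptotically equal, $f\simeq g$, if $f(n)=g(n)$ for almost all $n$. The $k$-kernel of a sequence $f$ is $\mathcal{N}_k(f) = \{ n \mapsto f(k^\alpha n + r) : \alpha, r \in \mathbb{N}_0,\ r < k^\alpha\}$, and $f$ is asymptotically $k$-automatic if $\mathcal{N}_k(f)/{\simeq}$ is finite. $\Sigma_k=\{0,1,\dots,k-1\}$, $\Sigma_k^*$ is the set of all finite words over $\Sigma_k$ (including the empty word), $|u|$ is the length of $u$, and $[u]_k$ is the integer whose base-$k$ expansion (most significant digit first) is $u$ (with $[\text{empty word}]_k=0$). For a map $\phi\colon\Sigma_k^*\to\Omega'$,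 its $k$-kernel is $\{u \mapsto \phi(uv) : v \in \Sigma_k^*\}$ (where $uv$ is concatenation), and $\phi$ is $k$-automatic if this set is finite. *)

theory Defs
  imports Main "HOL-Library.Liminf_Limsup" "HOL-Library.Extended_Real"
begin

definition upper_density :: "nat set \<Rightarrow> ereal" where
  "upper_density A = limsup (\<lambda>N. ereal (real (card (A \<inter> {..<N})) / real N))"

definition almost_all :: "(nat \<Rightarrow> bool) \<Rightarrow> bool" where
  "almost_all P \<longleftrightarrow> upper_density {n. \<not> P n} = 0"

definition asym_eq :: "(nat \<Rightarrow> 'a) \<Rightarrow> (nat \<Rightarrow> 'a) \<Rightarrow> bool" where
  "asym_eq f g \<longleftrightarrow> almost_all (\<lambda>n. f n = g n)"

definition asym_rel :: "((nat \<Rightarrow> 'a) \<times> (nat \<Rightarrow> 'a)) set" where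
  "asym_rel = {(f, g). asym_eq f g}"

definition seq_kernel :: "nat \<Rightarrow> (nat \<Rightarrow> 'a) \<Rightarrow> (nat \<Rightarrow> 'a) set" where
  "seq_kernel k f = {(\<lambda>n. f (k ^ a * n + r)) | a r. r < k ^ a}"

definition asym_automatic :: "nat \<Rightarrow> (nat \<Rightarrow> 'a) \<Rightarrow> bool" where
  "asym_automatic k f \<longleftrightarrow> finite (seq_kernel k f // asym_rel)"

text \<open>Words over \<Sigma>_k are lists of digits < k; value [u]_k, most significant digit first.\<close>
definition word_val :: "nat \<Rightarrow> nat list \<Rightarrow> nat" where
  "word_val k u = foldl (\<lambda>acc d. k * acc + d) 0 u"

text \<open>k-kernel of a map on \<Sigma>_k^* (maps considered as functions on \<Sigma>_k^* only).\<close>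
definition word_kernel :: "nat \<Rightarrow> (nat list \<Rightarrow> 'b) \<Rightarrow> (nat list \<Rightarrow> 'b) set" where
  "word_kernel k \<phi> = {(\<lambda>u. if u \<in> lists {..<k} then \<phi> (u @ v) else undefined) | v. v \<in> lists {..<k}}"

definition word_automatic :: "nat \<Rightarrow> (nat list \<Rightarrow> 'b) \<Rightarrow> bool" where
  "word_automatic k \<phi> \<longleftrightarrow> finite (word_kernel k \<phi>)"

end

theory Submission imports Defs begin

definition dseq :: "nat set \<Rightarrow> nat \<Rightarrow> real" where
  "dseq A N = real (card (A \<inter> {..<N})) / real N"

lemma dseq_nonneg: "dseq A N \<ge> 0" by (simp add: dseq_def)

lemma ud0_iff: "upper_density A = 0 \<longleftrightarrow> dseq A \<longlonglongrightarrow> 0"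
proof
  assume h: "upper_density A = 0"
  show "dseq A \<longlonglongrightarrow> 0"
  proof (rule order_tendstoI)
    fix a :: real assume "a < 0"
    then show "\<forall>\<^sub>F x in sequentially. a < dseq A x" using dseq_nonneg[of A]
      by (auto intro: always_eventually less_le_trans)
  next
    fix a :: real assume a: "0 < a"
    have "limsup (\<lambda>N. ereal (dseq A N)) < ereal a"
      using h a by (simp add: upper_density_def dseq_def)
    from Limsup_lessD[OF this] show "\<forall>\<^sub>F x in sequentially. dseq A x < a" by simp
  qed
next
  assume "dseq A \<longlonglongrightarrow> 0"
  then have "(\<lambda>N. ereal (dseq A N)) \<longlonglongrightarrow> ereal 0" by (rule tendsto_ereal)
  from lim_imp_Limsup[OF _ this] show "upper_density A = 0"
    by (simp add: upper_density_def dseq_def zero_ereal_def)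
qed

lemma sandw: "(\<And>N. 0 \<le> x N) \<Longrightarrow> (\<And>N. x N \<le> y N) \<Longrightarrow> y \<longlonglongrightarrow> 0 \<Longrightarrow> x \<longlonglongrightarrow> (0::real)"
  by (rule tendsto_sandwich[of "\<lambda>_. 0" _ _ y]) (auto intro: always_eventually)

lemma dseq_mono: "A \<subseteq> B \<Longrightarrow> dseq A N \<le> dseq B N"
  unfolding dseq_def by (auto intro!: divide_right_mono card_mono)

lemma ud0_subset: "A \<subseteq> B \<Longrightarrow> upper_density B = 0 \<Longrightarrow> upper_density A = 0"
  unfolding ud0_iff by (rule sandw[of _ "dseq B"], rule dseq_nonneg, erule dseq_mono)

lemma dseq_Un: "dseq (A \<union> B) N \<le> dseq A N + dseq B N"
proof -
  have "card ((A \<union> B) \<inter> {..<N}) \<le> card (A \<inter> {..<N}) + card (B \<inter> {..<N})"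
    by (metis Int_Un_distrib2 card_Un_le)
  then show ?thesis unfolding dseq_def by (simp add: add_divide_distrib[symmetric] divide_right_mono)
qed

lemma ud0_Un: "upper_density A = 0 \<Longrightarrow> upper_density B = 0 \<Longrightarrow> upper_density (A \<union> B) = 0"
  unfolding ud0_iff
  by (rule sandw[of _ "\<lambda>N. dseq A N + dseq B N"])
     (rule dseq_nonneg, rule dseq_Un, rule tendsto_add_zero)

lemma ud0_empty: "upper_density {} = 0"
  unfolding ud0_iff dseq_def by simp

lemma dseq_affine:
  assumes "r < c" 
  shows "dseq {n. c * n + r \<in> A} N \<le> real c * dseq A (c * N)"
proof (cases "N = 0")
  case True then show ?thesis by (simp add: dseq_def)
next
  case False
  have c: "c > 0" using assms by simp
  have sub: "(\<lambda>n. c * n + r) ` ({n. c * n + r \<in> A} \<inter> {..<N}) \<subseteq> A \<inter> {..<c * N}"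
  proof
    fix x assume "x \<in> (\<lambda>n. c * n + r) ` ({n. c * n + r \<in> A} \<inter> {..<N})"
    then obtain n where n: "n < N" "c * n + r \<in> A" "x = c * n + r" by auto
    from n(1) have "c * n + c \<le> c * N" by (metis Suc_leI mult_Suc_right mult_le_mono2 add.commute)
    then show "x \<in> A \<inter> {..<c * N}" using assms n by simp
  qed
  have inj: "inj_on (\<lambda>n. c * n + r) X" for X using c by (auto simp: inj_on_def)
  have "card ({n. c * n + r \<in> A} \<inter> {..<N}) = card ((\<lambda>n. c * n + r) ` ({n. c * n + r \<in> A} \<inter> {..<N}))"
    using inj by (simp add: card_image)
  also have "\<dots> \<le> card (A \<inter> {..<c * N})"
    using sub by (intro card_mono) auto
  finally have le: "real (card ({n. c * n + r \<in> A} \<inter> {..<N})) \<le> real (card (A \<inter> {..<c * N}))" by simp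
  have "real c * dseq A (c * N) = real (card (A \<inter> {..<c * N})) / real N"
    using c unfolding dseq_def by simp
  moreover have "real (card ({n. c * n + r \<in> A} \<inter> {..<N})) / real N \<le> real (card (A \<inter> {..<c * N})) / real N"
    by (rule divide_right_mono[OF le]) simp
  ultimately show ?thesis unfolding dseq_def by simp
qed

lemma ud0_affine:
  assumes "r < c" "upper_density A = 0"
  shows "upper_density {n. c * n + r \<in> A} = 0"
proof -
  have c: "c > 0" using assms by simp
  have sm: "strict_mono (\<lambda>N. c * N)" using c by (simp add: strict_mono_def)
  have fl: "filterlim (\<lambda>N. c * N) at_top at_top"
    by (rule filterlim_subseq[OF sm])
  have lim: "dseq A \<longlonglongrightarrow> 0" using assms(2) unfolding ud0_iff .
  have "(\<lambda>N. dseq A (c * N)) \<longlonglongrightarrow> 0"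
    using filterlim_compose[OF lim fl] .
  then have "(\<lambda>N. real c * dseq A (c * N)) \<longlonglongrightarrow> 0"
    by (rule tendsto_mult_right_zero)
  then show ?thesis unfolding ud0_iff
    by (rule sandw[OF dseq_nonneg dseq_affine[OF assms(1)]])
qed


lemma asym_refl: "asym_eq f f"
  unfolding asym_eq_def almost_all_def by (simp add: ud0_empty)

lemma asym_sym: "asym_eq f g \<Longrightarrow> asym_eq g f"
proof -
  have "{n. \<not> g n = f n} = {n. \<not> f n = g n}" by auto
  then show "asym_eq f g \<Longrightarrow> asym_eq g f" unfolding asym_eq_def almost_all_def by simp
qed

lemma asym_trans: "asym_eq f g \<Longrightarrow> asym_eq g h \<Longrightarrow> asym_eq f h"
proof -
  assume a: "asym_eq f g" "asym_eq g h"
  have "{n. f n \<noteq> h n} \<subseteq> {n. f n \<noteq> g n} \<union> {n. g n \<noteq> h n}" by auto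
  moreover have "upper_density ({n. f n \<noteq> g n} \<union> {n. g n \<noteq> h n}) = 0"
    using a unfolding asym_eq_def almost_all_def by (intro ud0_Un) auto
  ultimately show ?thesis unfolding asym_eq_def almost_all_def by (rule ud0_subset)
qed

lemma equiv_asym: "equiv UNIV asym_rel"
  unfolding equiv_def refl_on_def sym_def trans_def asym_rel_def
  using asym_refl asym_sym asym_trans by blast

lemma cls_eq: "asym_eq x y \<Longrightarrow> asym_rel `` {x} = asym_rel `` {y}"
  using eq_equiv_class_iff[OF equiv_asym, of x y] unfolding asym_rel_def by simp

lemma cls_eqD: "asym_rel `` {x} = asym_rel `` {y} \<Longrightarrow> asym_eq x y"
  using eq_equiv_class_iff[OF equiv_asym, of x y] unfolding asym_rel_def by simp

lemma asym_shift:
  assumes "asym_eq g h" "r < c"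
  shows "asym_eq (\<lambda>n. g (c * n + r)) (\<lambda>n. h (c * n + r))"
proof -
  have "{n. \<not> g (c * n + r) = h (c * n + r)} = {n. c * n + r \<in> {m. \<not> g m = h m}}" by simp
  moreover have "upper_density {n. c * n + r \<in> {m. \<not> g m = h m}} = 0"
    using assms unfolding asym_eq_def almost_all_def by (intro ud0_affine) auto
  ultimately show ?thesis unfolding asym_eq_def almost_all_def by simp
qed

lemma foldl_acc: fixes k :: nat shows "foldl (\<lambda>acc d. k * acc + d) a v = k ^ length v * a + foldl (\<lambda>acc d. k * acc + d) 0 v"
proof (induction v arbitrary: a)
  case Nil then show ?case by simp
next
  case (Cons x v)
  have "foldl (\<lambda>acc d. k * acc + d) a (x # v) = foldl (\<lambda>acc d. k * acc + d) (k * a + x) v" by simp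
  also have "\<dots> = k ^ length v * (k * a + x) + foldl (\<lambda>acc d. k * acc + d) 0 v" by (rule Cons.IH)
  also have "foldl (\<lambda>acc d. k * acc + d) 0 (x # v) = k ^ length v * x + foldl (\<lambda>acc d. k * acc + d) 0 v"
    using Cons.IH[of x] by simp
  ultimately show ?case by (simp add: algebra_simps)
qed

lemma word_val_append: "word_val k (u @ v) = k ^ length v * word_val k u + word_val k v"
  unfolding word_val_def foldl_append by (rule foldl_acc)

lemma word_val_less: "u \<in> lists {..<k} \<Longrightarrow> word_val k u < k ^ length u"
proof (induction u rule: rev_induct)
  case Nil then show ?case by (simp add: word_val_def)
next
  case (snoc x u)
  then have x: "x < k" and ih: "word_val k u < k ^ length u" by auto
  have "word_val k (u @ [x]) = k * word_val k u + x" by (simp add: word_val_append word_val_def)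
  also have "\<dots> < k * word_val k u + k" using x by simp
  also have "\<dots> = k * (word_val k u + 1)" by simp
  also have "\<dots> \<le> k * k ^ length u" using ih by (intro mult_le_mono2) simp
  finally show ?case by simp
qed

lemma word_exists: "r < k ^ a \<Longrightarrow> 0 < k \<Longrightarrow> \<exists>u\<in>lists {..<k}. length u = a \<and> word_val k u = r"
proof (induction a arbitrary: r)
  case 0 then show ?case by (intro bexI[of _ "[]"]) (auto simp: word_val_def)
next
  case (Suc a)
  have "r div k < k ^ a" using Suc.prems by (simp add: div_less_iff_less_mult mult.commute)
  then obtain u where u: "u \<in> lists {..<k}" "length u = a" "word_val k u = r div k"
    using Suc.IH Suc.prems(2) by blast
  have "word_val k (u @ [r mod k]) = k * word_val k u + r mod k" by (simp add: word_val_append word_val_def)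
  also have "\<dots> = k * (r div k) + r mod k" by (simp add: u)
  also have "\<dots> = r" by simp
  finally show ?case using u Suc.prems(2) by (intro bexI[of _ "u @ [r mod k]"]) auto
qed

theorem lemma2p3:
  fixes f :: "nat \<Rightarrow> 'a::finite" and k :: nat
  assumes "k \<ge> 2"
  shows "asym_automatic k f \<longleftrightarrow>
    (\<exists>(d::nat) (fs :: nat \<Rightarrow> nat \<Rightarrow> 'a) (\<phi> :: nat list \<Rightarrow> nat).
       d \<ge> 1 \<and> word_automatic k \<phi> \<and> (\<forall>u\<in>lists {..<k}. \<phi> u < d) \<and>
       (\<forall>u\<in>lists {..<k}. almost_all (\<lambda>n. f (k ^ length u * n + word_val k u) = fs (\<phi> u) n)))"
proof
  have k0: "0 < k" using assms by simp
  define fu where "fu u = (\<lambda>n. f (k ^ length u * n + word_val k u))" for u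
  have fu_ker: "fu u \<in> seq_kernel k f" if "u \<in> lists {..<k}" for u
  proof -
    have "fu u = (\<lambda>n. f (k ^ length u * n + word_val k u)) \<and> word_val k u < k ^ length u"
      using word_val_less[OF that] unfolding fu_def by simp
    then show ?thesis unfolding seq_kernel_def by blast
  qed
  have fu_app: "fu (u @ v) = (\<lambda>n. fu v (k ^ length u * n + word_val k u))" for u v
  proof
    fix n
    have "k ^ length (u @ v) * n + word_val k (u @ v) = k ^ length v * (k ^ length u * n + word_val k u) + word_val k v"
      by (simp add: word_val_append power_add algebra_simps)
    then show "fu (u @ v) n = fu v (k ^ length u * n + word_val k u)" unfolding fu_def by simp
  qed
  {
    assume A: "asym_automatic k f"
    define Q where "Q = seq_kernel k f // asym_rel"
    have finQ: "finite Q" using A unfolding Q_def asym_automatic_def .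
    then obtain h where h: "bij_betw h Q {0..<card Q}" using ex_bij_betw_finite_nat by blast
    define cls where "cls u = asym_rel `` {fu u}" for u
    have clsQ: "cls u \<in> Q" if "u \<in> lists {..<k}" for u
      unfolding cls_def Q_def by (rule quotientI[OF fu_ker[OF that]])
    have fu_cls: "fu u \<in> cls u" for u
      unfolding cls_def by (rule equiv_class_self[OF equiv_asym]) simp
    define \<phi> where "\<phi> u = h (cls u)" for u
    define fs where "fs i = (SOME g. g \<in> the_inv_into Q h i)" for i
    have inj: "inj_on h Q" using h by (simp add: bij_betw_def)
    have "[] \<in> lists {..<k}" by simp
    then have "Q \<noteq> {}" using clsQ by blast
    then have d1: "card Q \<ge> 1" using finQ by (simp add: Suc_le_eq card_gt_0_iff)
    have phi_lt: "\<phi> u < card Q" if "u \<in> lists {..<k}" for u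
      using h clsQ[OF that] unfolding \<phi>_def bij_betw_def by auto
    have ae: "almost_all (\<lambda>n. f (k ^ length u * n + word_val k u) = fs (\<phi> u) n)"
      if u: "u \<in> lists {..<k}" for u
    proof -
      have "the_inv_into Q h (\<phi> u) = cls u"
        unfolding \<phi>_def by (rule the_inv_into_f_f[OF inj clsQ[OF u]])
      then have "fs (\<phi> u) = (SOME g. g \<in> cls u)" unfolding fs_def by simp
      then have "fs (\<phi> u) \<in> cls u" using fu_cls by (metis someI)
      then have "asym_eq (fu u) (fs (\<phi> u))" unfolding cls_def asym_rel_def by simp
      then show ?thesis unfolding asym_eq_def fu_def .
    qed
    define K where "K v = (\<lambda>u. if u \<in> lists {..<k} then \<phi> (u @ v) else undefined)" for v
    have Kcong: "K v = K w" if "cls v = cls w" for v w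
    proof
      fix u
      show "K v u = K w u"
      proof (cases "u \<in> lists {..<k}")
        case False then show ?thesis unfolding K_def by simp
      next
        case True
        have "asym_eq (fu v) (fu w)" using that unfolding cls_def by (rule cls_eqD)
        then have "asym_eq (fu (u @ v)) (fu (u @ w))"
          unfolding fu_app by (rule asym_shift[OF _ word_val_less[OF True]])
        then have "cls (u @ v) = cls (u @ w)"
          unfolding cls_def by (rule cls_eq)
        then show ?thesis unfolding K_def \<phi>_def using True by simp
      qed
    qed
    have "word_kernel k \<phi> \<subseteq> (\<lambda>C. K (SOME v. v \<in> lists {..<k} \<and> cls v = C)) ` Q"
    proof
      fix F assume "F \<in> word_kernel k \<phi>"
      then obtain v where v: "v \<in> lists {..<k}" "F = K v" unfolding word_kernel_def K_def by blast
      have ex: "\<exists>v'. v' \<in> lists {..<k} \<and> cls v' = cls v" using v by blast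
      have sv: "cls (SOME v'. v' \<in> lists {..<k} \<and> cls v' = cls v) = cls v"
        using someI_ex[OF ex] by blast
      then have "F = K (SOME v'. v' \<in> lists {..<k} \<and> cls v' = cls v)" using Kcong[OF sv] v(2) by simp
      then show "F \<in> (\<lambda>C. K (SOME v. v \<in> lists {..<k} \<and> cls v = C)) ` Q"
        using clsQ[OF v(1)] by blast
    qed
    then have "word_automatic k \<phi>" unfolding word_automatic_def by (rule finite_subset[OF _ finite_imageI[OF finQ]])
    then show "\<exists>(d::nat) (fs :: nat \<Rightarrow> nat \<Rightarrow> 'a) (\<phi> :: nat list \<Rightarrow> nat).
       d \<ge> 1 \<and> word_automatic k \<phi> \<and> (\<forall>u\<in>lists {..<k}. \<phi> u < d) \<and>
       (\<forall>u\<in>lists {..<k}. almost_all (\<lambda>n. f (k ^ length u * n + word_val k u) = fs (\<phi> u) n))"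
      by (intro exI[of _ "card Q"] exI[of _ fs] exI[of _ \<phi>]) (use d1 phi_lt ae in auto)
  }
  {
    assume "\<exists>(d::nat) (fs :: nat \<Rightarrow> nat \<Rightarrow> 'a) (\<phi> :: nat list \<Rightarrow> nat).
       d \<ge> 1 \<and> word_automatic k \<phi> \<and> (\<forall>u\<in>lists {..<k}. \<phi> u < d) \<and>
       (\<forall>u\<in>lists {..<k}. almost_all (\<lambda>n. f (k ^ length u * n + word_val k u) = fs (\<phi> u) n))"
    then obtain d fs \<phi> where lt: "\<forall>u\<in>lists {..<k}. \<phi> u < (d::nat)"
      and ae: "\<forall>u\<in>lists {..<k}. almost_all (\<lambda>n. f (k ^ length u * n + word_val k u) = fs (\<phi> u) n)"
      by blast
    have "seq_kernel k f // asym_rel \<subseteq> (\<lambda>i. asym_rel `` {fs i}) ` {..<d}"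
    proof
      fix X assume "X \<in> seq_kernel k f // asym_rel"
      then obtain g where X: "X = asym_rel `` {g}" and g: "g \<in> seq_kernel k f" by (rule quotientE)
      then obtain a r where ar: "g = (\<lambda>n. f (k ^ a * n + r))" "r < k ^ a" unfolding seq_kernel_def by blast
      then obtain u where u: "u \<in> lists {..<k}" "length u = a" "word_val k u = r"
        using word_exists[OF ar(2) k0] by blast
      have "asym_eq g (fs (\<phi> u))" using ae u ar unfolding asym_eq_def by auto
      then have "X = asym_rel `` {fs (\<phi> u)}"
        unfolding X by (rule cls_eq)
      moreover have "\<phi> u \<in> {..<d}" using lt u(1) by simp
      ultimately show "X \<in> (\<lambda>i. asym_rel `` {fs i}) ` {..<d}" by (rule image_eqI)
    qed
    then show "asym_automatic k f" unfolding asym_automatic_def by (rule finite_surj[OF finite_lessThan])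
  }
qed

end
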